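(* Let $E,F$ be Lebesgue-measurable subsets of $[-\infty,\infty]$, and let $m:F\to E$ be a surjective, measure-preserving, order-preserving (nondecreasing) map. Then there is a Lebesgue-null set $F_0\subseteq F$ such that $m$ restricted to $F\setminus F_0$ is a bijection onto $E$.
   Context: Lebesgue measure $\lambda$ on $[-\infty,\infty]$ gives $\{\pm\infty\}$ measure zero. A map $m:F\to E$ is measure-preserving if for every measurable $A\subseteq E$, $m^{-1}(A)$ is measurable with $\lambda(m^{-1}(A))=\lambda(A)$. *)

theory Defs
  imports "HOL-Analysis.Analysis"
begin

text \<open>Lebesgue measure on the extended real line [-infinity, infinity]:
  a set A of extended reals is measurable iff its finite part is Lebesgue
  measurable in the reals; its measure is the Lebesgue measure of the finite
  part (so the two points at infinity have measure zero).\<close>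

definition ereal_lmeasurable :: "ereal set \<Rightarrow> bool" where
  "ereal_lmeasurable A \<longleftrightarrow> {x::real. ereal x \<in> A} \<in> sets lebesgue"

definition ereal_lmeasure :: "ereal set \<Rightarrow> ennreal" where
  "ereal_lmeasure A = emeasure lebesgue {x::real. ereal x \<in> A}"

definition ereal_measure_preserving ::
  "(ereal \<Rightarrow> ereal) \<Rightarrow> ereal set \<Rightarrow> ereal set \<Rightarrow> bool" where
  "ereal_measure_preserving m F E \<longleftrightarrow>
     (\<forall>A. A \<subseteq> E \<and> ereal_lmeasurable A \<longrightarrow>
        ereal_lmeasurable {x\<in>F. m x \<in> A} \<and>
        ereal_lmeasure {x\<in>F. m x \<in> A} = ereal_lmeasure A)"

end

theory Submission
  imports Defs
begin

lemma rat_between_ereal: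
  fixes x y :: ereal assumes "x < y"
  shows "\<exists>q\<in>\<rat>. x < ereal q \<and> ereal q < y"
proof -
  obtain a where a: "x < ereal a" "ereal a < y" using ereal_dense2[OF assms] by blast
  obtain b where b: "ereal a < ereal b" "ereal b < y" using ereal_dense2[OF a(2)] by blast
  then have "a < b" by simp
  then obtain q where q: "q \<in> \<rat>" "a < q" "q < b" using Rats_dense_in_real[of a b] by auto
  have "ereal a < ereal q" "ereal q < ereal b" using q by auto
  then have "x < ereal q" "ereal q < y" using a(1) b(2) by (meson less_trans)+
  then show ?thesis using q(1) by blast
qed

lemma single_null: "{x::real. ereal x \<in> {e}} \<in> null_sets lebesgue"
proof (cases "\<exists>r. e = ereal r")
  case True
  then obtain r where "e = ereal r" by blast
  then have "{x::real. ereal x \<in> {e}} = {r}" by auto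
  moreover have "{r} \<in> null_sets lborel" by (simp add: null_sets_def)
  ultimately show ?thesis using null_sets_completionI by metis
next
  case False
  then have "{x::real. ereal x \<in> {e}} = {}" by auto
  then show ?thesis by simp
qed

theorem mainTheorem13:
  fixes E F :: "ereal set" and m :: "ereal \<Rightarrow> ereal"
  assumes "ereal_lmeasurable E" and "ereal_lmeasurable F"
    and "m ` F = E"
    and "ereal_measure_preserving m F E"
    and "\<forall>x\<in>F. \<forall>y\<in>F. x \<le> y \<longrightarrow> m x \<le> m y"
  shows "\<exists>F0. F0 \<subseteq> F \<and> ereal_lmeasurable F0 \<and> ereal_lmeasure F0 = 0 \<and>
           bij_betw m (F - F0) E"
proof -
  note mp = assms(4)[unfolded ereal_measure_preserving_def]
  define fib where "fib e = {x\<in>F. m x \<in> {e}}" for e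
  define c where "c e = (SOME x. x \<in> F \<and> m x = e)" for e
  have c: "c e \<in> F \<and> m (c e) = e" if "e \<in> E" for e
    unfolding c_def by (rule someI_ex) (use that assms(3) in auto)
  have fibnull: "{x::real. ereal x \<in> fib e} \<in> null_sets lebesgue" if "e \<in> E" for e
  proof -
    have "ereal_lmeasurable {e}" unfolding ereal_lmeasurable_def using single_null by auto
    then have "ereal_lmeasurable (fib e) \<and> ereal_lmeasure (fib e) = ereal_lmeasure {e}"
      using mp that unfolding fib_def by auto
    moreover have "ereal_lmeasure {e} = 0" unfolding ereal_lmeasure_def using single_null[of e] null_setsD1 by blast
    ultimately show ?thesis unfolding ereal_lmeasurable_def ereal_lmeasure_def by auto
  qed
  define S where "S = {e\<in>E. \<exists>x\<in>fib e. \<exists>y\<in>fib e. x < y}"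
  define q where "q e = (SOME q. q \<in> \<rat> \<and> (\<exists>x\<in>fib e. \<exists>y\<in>fib e. x < ereal q \<and> ereal q < y))" for e
  have q: "q e \<in> \<rat> \<and> (\<exists>x\<in>fib e. \<exists>y\<in>fib e. x < ereal (q e) \<and> ereal (q e) < y)" if "e \<in> S" for e
  proof -
    from that obtain x y where "x\<in>fib e" "y\<in>fib e" "x < y" unfolding S_def by blast
    then obtain r where "r \<in> \<rat>" "x < ereal r" "ereal r < y" using rat_between_ereal by blast
    then have "\<exists>q. q \<in> \<rat> \<and> (\<exists>x\<in>fib e. \<exists>y\<in>fib e. x < ereal q \<and> ereal q < y)"
      using \<open>x\<in>fib e\<close> \<open>y\<in>fib e\<close> by blast
    then show ?thesis unfolding q_def by (rule someI_ex)
  qed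
  have lt: "ereal (q e) < ereal (q e')" if ee: "e \<in> S" "e' \<in> S" "e < e'" for e e'
  proof -
    obtain x y where xy: "x\<in>fib e" "y\<in>fib e" "ereal (q e) < y" using q[OF ee(1)] by blast
    obtain x' where xy': "x'\<in>fib e'" "x' < ereal (q e')" using q[OF ee(2)] by blast
    have "y < x'"
    proof (rule ccontr)
      assume "\<not> y < x'"
      then have "x' \<le> y" by simp
      moreover have "x' \<in> F" "y \<in> F" using xy xy' unfolding fib_def by auto
      ultimately have "m x' \<le> m y" using assms(5) by blast
      then show False using xy xy' ee(3) unfolding fib_def by auto
    qed
    then show ?thesis using xy xy' by (meson less_trans)
  qed
  have "inj_on q S"
  proof (rule inj_onI)
    fix e e' assume "e \<in> S" "e' \<in> S" "q e = q e'"
    show "e = e'"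
    proof (rule ccontr)
      assume "e \<noteq> e'"
      then have "e < e' \<or> e' < e" by auto
      then show False using lt[of e e'] lt[of e' e] \<open>e \<in> S\<close> \<open>e' \<in> S\<close> \<open>q e = q e'\<close> by auto
    qed
  qed
  moreover have "countable (q ` S)"
  proof -
    have "q ` S \<subseteq> \<rat>" using q by auto
    then show ?thesis using countable_subset countable_rat by blast
  qed
  ultimately have cS: "countable S" using countable_image_inj_on by blast
  define F0 where "F0 = {x\<in>F. x \<noteq> c (m x)}"
  have sub: "{x::real. ereal x \<in> F0} \<subseteq> (\<Union>e\<in>S. {x::real. ereal x \<in> fib e})"
  proof
    fix r assume "r \<in> {x::real. ereal x \<in> F0}"
    then have r: "ereal r \<in> F" "ereal r \<noteq> c (m (ereal r))" unfolding F0_def by auto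
    let ?e = "m (ereal r)"
    have eE: "?e \<in> E" using r assms(3) by auto
    have "ereal r \<in> fib ?e" "c ?e \<in> fib ?e" using r c[OF eE] unfolding fib_def by auto
    moreover have "ereal r < c ?e \<or> c ?e < ereal r" using r(2) by auto
    ultimately have "?e \<in> S" using eE unfolding S_def by blast
    then show "r \<in> (\<Union>e\<in>S. {x::real. ereal x \<in> fib e})" using \<open>ereal r \<in> fib ?e\<close> by blast
  qed
  have "(\<Union>e\<in>S. {x::real. ereal x \<in> fib e}) \<in> null_sets lebesgue"
    using cS fibnull S_def by (intro null_sets_UN') auto
  then have N: "{x::real. ereal x \<in> F0} \<in> null_sets lebesgue"
    using sub completion.complete2 by blast
  have "bij_betw m (F - F0) E"
  proof (rule bij_betw_imageI)
    show "inj_on m (F - F0)" unfolding F0_def by (rule inj_onI) auto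
    show "m ` (F - F0) = E"
    proof
      show "m ` (F - F0) \<subseteq> E" using assms(3) by auto
      show "E \<subseteq> m ` (F - F0)"
      proof
        fix e assume "e \<in> E"
        then have "c e \<in> F - F0" "m (c e) = e" using c unfolding F0_def by auto
        then show "e \<in> m ` (F - F0)" by (metis image_eqI)
      qed
    qed
  qed
  moreover have "F0 \<subseteq> F" unfolding F0_def by auto
  ultimately show ?thesis using N unfolding ereal_lmeasurable_def ereal_lmeasure_def by auto
qed

end
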